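(* Asymptotically almost surely, for all $0\le j<i\le i_{\max}$ and all $v\in V\cap\mathcal L_i$, $$|\Theta_{i,j}(v)|\le 4\max\bigl(8R,\ \mathbb E|\Theta_{i,j}((t_i,0))|\bigr),$$ where $\mathbb E|\Theta_{i,j}((t_i,0))|$ denotes the expected number of points of $V$ in $\mathcal L_j\cap S(-2\theta_{i,j},2\theta_{i,j})$.
   Context: Model $\mathrm{Poi}_{\alpha,\nu}(n)$: fix $\alpha>1$, $\nu>0$, $R=2\log(n/\nu)$. Points are in polar coordinates $(r,\theta)$ of the native representation of the hyperbolic plane, with $\cosh d_h(u,u')=\cosh r_u\cosh r_{u'}-\sinh r_u\sinh r_{u'}\cos(\theta_u-\theta_{u'})$. $V$ is a Poisson point process on $\{r<R\}$ with intensity $\nu e^{R/2}\frac{1}{2\pi}\frac{\alpha\sinh(\alpha r)}{\cosh(\alpha R)-1}\,dr\,d\theta$. For a point $v$ write $t_v=R-r_v$ and identify $v$ with $(t_v,\theta_v)$. Angles are modulo $2\pi$. For $t_1,t_2\in[0,R/2]$, $\theta^R(t_1,t_2)=\arccos\bigl(\frac{\cosh(R-t_1)\cosh(R-t_2)-\cosh R}{\sinh(R-t_1)\sinh(R-t_2)}\bigr)$. Sectors: $S(\theta_1,\theta_2)=\{(t,\theta):0\le t<R,\ \theta_1\le\theta<\theta_2\}$; annuli $\mathcal L(t^-,t^+)=\{(t,\theta):t^-\le t<t^+\}$. Layers: $t_{-1}=0$, $t_i=(\frac{4\alpha}{\alpha-1}+3i)\log R$ ($i\ge0$); $t_{\max}=R/(2\alpha)$;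 $i_{\max}=\min\{i\ge0:t_i\ge t_{\max}\}$; $\theta_{i,j}=\theta^R(t_i,t_j)$; $\mathcal L_i=\mathcal L(t_{i-1},t_i)$. For a point $p$ and $0\le j<i\le i_{\max}$, $\Theta_{i,j}(p)=V\cap\mathcal L_j\cap S(\theta_p-2\theta_{i,j},\theta_p+2\theta_{i,j})$. *)

theory Defs
  imports "HOL-Probability.Probability"
begin

text \<open>Model Poi_{alpha,nu}(n). Points are pairs (r, theta) in native polar coordinates,
  with theta taken in [0, 2 pi). The coordinate t of a point is R - r.\<close>

definition Rn :: "real \<Rightarrow> nat \<Rightarrow> real" where
  "Rn \<nu> n = 2 * ln (real n / \<nu>)"

definition hyp_domain :: "real \<Rightarrow> (real \<times> real) set" where
  "hyp_domain R = {(r, \<theta>). 0 \<le> r \<and> r < R \<and> 0 \<le> \<theta> \<and> \<theta> < 2 * pi}"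

definition poi_intensity :: "real \<Rightarrow> real \<Rightarrow> real \<Rightarrow> real \<Rightarrow> real" where
  "poi_intensity \<alpha> \<nu> R r =
     \<nu> * exp (R / 2) * (1 / (2 * pi)) * (\<alpha> * sinh (\<alpha> * r) / (cosh (\<alpha> * R) - 1))"

definition intensity_measure :: "real \<Rightarrow> real \<Rightarrow> nat \<Rightarrow> (real \<times> real) measure" where
  "intensity_measure \<alpha> \<nu> n =
     density lborel (\<lambda>p. ennreal (indicator (hyp_domain (Rn \<nu> n)) p * poi_intensity \<alpha> \<nu> (Rn \<nu> n) (fst p)))"

definition poisson_pp ::
  "'w measure \<Rightarrow> (real \<times> real) set \<Rightarrow> (real \<times> real) measure \<Rightarrow> ('w \<Rightarrow> (real \<times> real) set) \<Rightarrow> bool" where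
  "poisson_pp M D \<mu> V \<longleftrightarrow>
     prob_space M \<and>
     (\<forall>\<omega>\<in>space M. finite (V \<omega>) \<and> V \<omega> \<subseteq> D) \<and>
     (\<forall>(A :: nat \<Rightarrow> (real \<times> real) set) I. finite I \<longrightarrow> disjoint_family_on A I \<longrightarrow>
        (\<forall>i\<in>I. A i \<in> sets borel) \<longrightarrow>
        prob_space.indep_vars M (\<lambda>_. count_space UNIV) (\<lambda>i \<omega>. card (V \<omega> \<inter> A i)) I) \<and>
     (\<forall>A \<in> sets borel. \<forall>k::nat.
        measure M {\<omega> \<in> space M. card (V \<omega> \<inter> A) = k}
          = exp (- measure \<mu> A) * measure \<mu> A ^ k / fact k)"

definition thetaR :: "real \<Rightarrow> real \<Rightarrow> real \<Rightarrow> real" where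
  "thetaR R t1 t2 = arccos ((cosh (R - t1) * cosh (R - t2) - cosh R) / (sinh (R - t1) * sinh (R - t2)))"

definition t_layer :: "real \<Rightarrow> real \<Rightarrow> nat \<Rightarrow> real" where
  "t_layer \<alpha> R i = (4 * \<alpha> / (\<alpha> - 1) + 3 * real i) * ln R"

text \<open>Lower boundary of layer L_i, i.e. t_{i-1} with t_{-1} = 0.\<close>
definition t_lower :: "real \<Rightarrow> real \<Rightarrow> nat \<Rightarrow> real" where
  "t_lower \<alpha> R i = (if i = 0 then 0 else t_layer \<alpha> R (i - 1))"

definition i_max :: "real \<Rightarrow> real \<Rightarrow> nat" where
  "i_max \<alpha> R = (LEAST i. t_layer \<alpha> R i \<ge> R / (2 * \<alpha>))"

definition theta_ij :: "real \<Rightarrow> real \<Rightarrow> nat \<Rightarrow> nat \<Rightarrow> real" where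
  "theta_ij \<alpha> R i j = thetaR R (t_layer \<alpha> R i) (t_layer \<alpha> R j)"

definition annulus :: "real \<Rightarrow> real \<Rightarrow> real \<Rightarrow> (real \<times> real) set" where
  "annulus R tm tp = {(r, \<theta>). tm \<le> R - r \<and> R - r < tp}"

definition layer :: "real \<Rightarrow> real \<Rightarrow> nat \<Rightarrow> (real \<times> real) set" where
  "layer \<alpha> R i = annulus R (t_lower \<alpha> R i) (t_layer \<alpha> R i)"

definition sector :: "real \<Rightarrow> real \<Rightarrow> real \<Rightarrow> (real \<times> real) set" where
  "sector R \<theta>1 \<theta>2 = {(r, \<theta>). 0 \<le> R - r \<and> R - r < R \<and>
      (\<exists>k::int. \<theta>1 \<le> \<theta> + 2 * pi * of_int k \<and> \<theta> + 2 * pi * of_int k < \<theta>2)}"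

definition Theta_set :: "real \<Rightarrow> real \<Rightarrow> (real \<times> real) set \<Rightarrow> nat \<Rightarrow> nat \<Rightarrow> real \<times> real \<Rightarrow> (real \<times> real) set" where
  "Theta_set \<alpha> R Vs i j p =
     Vs \<inter> layer \<alpha> R j \<inter> sector R (snd p - 2 * theta_ij \<alpha> R i j) (snd p + 2 * theta_ij \<alpha> R i j)"

end

theory Submission
  imports Defs "HOL-Real_Asymp.Real_Asymp"
begin

lemma pp_prob: "poisson_pp M D \<mu> V \<Longrightarrow> prob_space M"
  unfolding poisson_pp_def by (elim conjE)

lemma pp_meas:
  assumes "poisson_pp M D \<mu> V" "A \<in> sets borel"
  shows "(\<lambda>\<omega>. card (V \<omega> \<inter> A)) \<in> M \<rightarrow>\<^sub>M count_space UNIV"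
proof -
  have P: "prob_space M" using assms(1) by (rule pp_prob)
  have "prob_space.indep_vars M (\<lambda>_. count_space UNIV) (\<lambda>i \<omega>. card (V \<omega> \<inter> (\<lambda>_::nat. A) i)) {0}"
  proof -
    have H: "\<forall>(A :: nat \<Rightarrow> (real \<times> real) set) I. finite I \<longrightarrow> disjoint_family_on A I \<longrightarrow>
        (\<forall>i\<in>I. A i \<in> sets borel) \<longrightarrow>
        prob_space.indep_vars M (\<lambda>_. count_space UNIV) (\<lambda>i \<omega>. card (V \<omega> \<inter> A i)) I"
      using assms(1) unfolding poisson_pp_def by (elim conjE) assumption
    have d: "disjoint_family_on (\<lambda>_::nat. A) {0}" unfolding disjoint_family_on_def by simp
    show ?thesis using H[rule_format, OF _ d] assms(2) by simp
  qed
  then have "\<forall>i\<in>{0::nat}. (\<lambda>\<omega>. card (V \<omega> \<inter> A)) \<in> M \<rightarrow>\<^sub>M count_space UNIV"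
    unfolding prob_space.indep_vars_def2[OF P] by (elim conjE) simp
  then show ?thesis by simp
qed

lemma pp_eq:
  assumes "poisson_pp M D \<mu> V" "A \<in> sets borel"
  shows "measure M {\<omega> \<in> space M. card (V \<omega> \<inter> A) = k}
          = exp (- measure \<mu> A) * measure \<mu> A ^ k / fact k"
proof -
  have H: "\<forall>A \<in> sets borel. \<forall>k::nat.
        measure M {\<omega> \<in> space M. card (V \<omega> \<inter> A) = k}
          = exp (- measure \<mu> A) * measure \<mu> A ^ k / fact k"
    using assms(1) unfolding poisson_pp_def by (elim conjE) assumption
  show ?thesis using H assms(2) by blast
qed

lemma pp_sets:
  assumes "poisson_pp M D \<mu> V" "A \<in> sets borel"
  shows "{\<omega> \<in> space M. P (card (V \<omega> \<inter> A))} \<in> sets M"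
proof -
  have "{\<omega> \<in> space M. P (card (V \<omega> \<inter> A))} = (\<lambda>\<omega>. card (V \<omega> \<inter> A)) -` {k. P k} \<inter> space M" by auto
  also have "\<dots> \<in> sets M" using pp_meas[OF assms] by (rule measurable_sets) auto
  finally show ?thesis .
qed

lemma exp_tail_bound:
  fixes l :: real assumes "l \<ge> 0"
  shows "exp l - (\<Sum>k<m. l ^ k / fact k) \<le> exp (2*l) / 2 ^ m"
proof -
  have s1: "(\<lambda>k. l ^ k / fact k) sums exp l" using exp_converges[of l] by (simp add: divide_inverse mult.commute)
  have s2: "(\<lambda>k. (2*l) ^ k / fact k) sums exp (2*l)" using exp_converges[of "2*l"] by (simp add: divide_inverse mult.commute)
  have e1: "exp l = (\<Sum>j. l ^ (j+m) / fact (j+m)) + (\<Sum>k<m. l ^ k / fact k)"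
    using suminf_split_initial_segment[OF sums_summable[OF s1], of m] sums_unique[OF s1] by simp
  have e2: "exp (2*l) = (\<Sum>j. (2*l) ^ (j+m) / fact (j+m)) + (\<Sum>k<m. (2*l) ^ k / fact k)"
    using suminf_split_initial_segment[OF sums_summable[OF s2], of m] sums_unique[OF s2] by simp
  have sm1: "summable (\<lambda>j. l ^ (j+m) / fact (j+m))"
    using summable_ignore_initial_segment[OF sums_summable[OF s1], of m] by simp
  have sm2: "summable (\<lambda>j. (2*l) ^ (j+m) / fact (j+m))"
    using summable_ignore_initial_segment[OF sums_summable[OF s2], of m] by simp
  have trm: "l ^ (j+m) / fact (j+m) \<le> ((2*l) ^ (j+m) / fact (j+m)) / 2 ^ m" for j
  proof -
    have eq: "((2*l) ^ (j+m) / fact (j+m)) / 2 ^ m = (l ^ (j+m) * 2^j) / fact (j+m)"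
      by (simp add: power_mult_distrib power_add)
    have "l^(j+m) \<le> l^(j+m) * 2^j" using assms by (simp add: mult_le_cancel_left1)
    then show ?thesis unfolding eq by (intro divide_right_mono) auto
  qed
  have A: "(\<Sum>j. l ^ (j+m) / fact (j+m)) \<le> (\<Sum>j. ((2*l) ^ (j+m) / fact (j+m)) / 2 ^ m)"
    by (rule suminf_le[OF trm sm1 summable_divide[OF sm2]])
  have B: "(\<Sum>j. ((2*l) ^ (j+m) / fact (j+m)) / 2 ^ m) = (\<Sum>j. (2*l) ^ (j+m) / fact (j+m)) / 2 ^ m"
    by (rule suminf_divide[OF sm2])
  have C0: "0 \<le> (\<Sum>k<m. (2*l) ^ k / fact k)" using assms by (intro sum_nonneg) auto
  have C: "(\<Sum>j. (2*l) ^ (j+m) / fact (j+m)) \<le> exp (2*l)" using e2 C0 by linarith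
  have D: "(\<Sum>j. (2*l) ^ (j+m) / fact (j+m)) / 2 ^ m \<le> exp (2*l) / 2^m"
    using C by (intro divide_right_mono) auto
  have "exp l - (\<Sum>k<m. l ^ k / fact k) = (\<Sum>j. l ^ (j+m) / fact (j+m))" using e1 by linarith
  then show ?thesis using A B D by linarith
qed

lemma pp_less_sum:
  assumes "poisson_pp M D \<mu> V" "A \<in> sets borel"
  shows "measure M {\<omega> \<in> space M. card (V \<omega> \<inter> A) < m}
          = (\<Sum>k<m. exp (- measure \<mu> A) * measure \<mu> A ^ k / fact k)"
proof (induction m)
  case 0 then show ?case by simp
next
  case (Suc m)
  interpret prob_space M using pp_prob[OF assms(1)] .
  have "{\<omega> \<in> space M. card (V \<omega> \<inter> A) < Suc m} = {\<omega> \<in> space M. card (V \<omega> \<inter> A) < m} \<union> {\<omega> \<in> space M. card (V \<omega> \<inter> A) = m}"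
    by auto
  then have "measure M {\<omega> \<in> space M. card (V \<omega> \<inter> A) < Suc m} = measure M {\<omega> \<in> space M. card (V \<omega> \<inter> A) < m} + measure M {\<omega> \<in> space M. card (V \<omega> \<inter> A) = m}"
    using finite_measure_Union[OF pp_sets[OF assms, of "\<lambda>k. k < m"] pp_sets[OF assms, of "\<lambda>k. k = m"]] by auto
  then show ?case using Suc pp_eq[OF assms] by simp
qed

lemma pp_tail:
  assumes "poisson_pp M D \<mu> V" "A \<in> sets borel" "x \<ge> 0"
  shows "measure M {\<omega> \<in> space M. real (card (V \<omega> \<inter> A)) > x} \<le> exp (measure \<mu> A) / 2 powr x"
proof -
  interpret prob_space M using pp_prob[OF assms(1)] .
  define l where "l = measure \<mu> A"
  have l0: "l \<ge> 0" unfolding l_def by simp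
  define m where "m = nat \<lfloor>x\<rfloor> + 1"
  have mx: "real m > x" unfolding m_def using assms(3) by linarith
  have ev: "{\<omega> \<in> space M. real (card (V \<omega> \<inter> A)) > x} = space M - {\<omega> \<in> space M. card (V \<omega> \<inter> A) < m}"
  proof (intro set_eqI iffI)
    fix \<omega> assume "\<omega> \<in> {\<omega> \<in> space M. real (card (V \<omega> \<inter> A)) > x}"
    then show "\<omega> \<in> space M - {\<omega> \<in> space M. card (V \<omega> \<inter> A) < m}"
      unfolding m_def using assms(3) by auto linarith
  next
    fix \<omega> assume "\<omega> \<in> space M - {\<omega> \<in> space M. card (V \<omega> \<inter> A) < m}"
    then have "\<omega> \<in> space M" "card (V \<omega> \<inter> A) \<ge> m" by auto
    then show "\<omega> \<in> {\<omega> \<in> space M. real (card (V \<omega> \<inter> A)) > x}" using mx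
      by (metis (mono_tags, lifting) mem_Collect_eq of_nat_le_iff order_less_le_trans)
  qed
  have "measure M {\<omega> \<in> space M. real (card (V \<omega> \<inter> A)) > x} = 1 - (\<Sum>k<m. exp (- l) * l ^ k / fact k)"
    unfolding ev using finite_measure_compl[OF pp_sets[OF assms(1,2), of "\<lambda>k. k < m"]] pp_less_sum[OF assms(1,2)] l_def prob_space by simp
  also have "(\<Sum>k<m. exp (- l) * l ^ k / fact k) = exp (-l) * (\<Sum>k<m. l ^ k / fact k)"
    by (simp add: sum_distrib_left)
  also have "1 - exp (-l) * (\<Sum>k<m. l ^ k / fact k) = exp (-l) * (exp l - (\<Sum>k<m. l ^ k / fact k))"
    by (simp add: algebra_simps exp_minus_inverse)
  also have "\<dots> \<le> exp (-l) * (exp (2*l) / 2 ^ m)"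
    by (intro mult_left_mono exp_tail_bound l0) auto
  also have "\<dots> = exp l / 2 ^ m" by (simp add: exp_add[symmetric])
  also have "\<dots> \<le> exp l / 2 powr x"
  proof -
    have "2 powr x \<le> 2 powr (real m)" using mx by simp
    also have "2 powr (real m) = 2 ^ m" by (simp add: powr_realpow)
    finally show ?thesis by (intro divide_left_mono) auto
  qed
  finally show ?thesis unfolding l_def .
qed

lemma poisson_mean_sums:
  fixes l :: real
  shows "(\<lambda>k. real k * (exp (- l) * l ^ k / fact k)) sums l"
proof -
  have s1: "(\<lambda>k. l ^ k / fact k) sums exp l" using exp_converges[of l] by (simp add: divide_inverse mult.commute)
  have s2: "(\<lambda>k. (exp (- l) * l) * (l ^ k / fact k)) sums ((exp (- l) * l) * exp l)"
    by (rule sums_mult[OF s1])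
  have e0: "exp (- l) * exp l = 1" by (simp add: exp_minus)
  have e: "(exp (- l) * l) * exp l = l" using e0 by (simp add: algebra_simps)
  have f: "(\<lambda>k. real (Suc k) * (exp (- l) * l ^ (Suc k) / fact (Suc k))) = (\<lambda>k. (exp (- l) * l) * (l ^ k / fact k))"
  proof
    fix k
    have "fact (Suc k) = (real (Suc k)) * (fact k :: real)" by simp
    then show "real (Suc k) * (exp (- l) * l ^ (Suc k) / fact (Suc k)) = (exp (- l) * l) * (l ^ k / fact k)"
      by (simp del: of_nat_Suc fact_Suc add: field_simps)
  qed
  have "(\<lambda>k. real (Suc k) * (exp (- l) * l ^ (Suc k) / fact (Suc k))) sums l"
    using s2 e f by simp
  then have "(\<lambda>k. real k * (exp (- l) * l ^ k / fact k)) sums (l + real 0 * (exp (- l) * l ^ 0 / fact 0))"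
    by (rule sums_Suc_iff[THEN iffD1])
  then show ?thesis by simp
qed

lemma pp_mean:
  assumes pp: "poisson_pp M D \<mu> V" and A: "A \<in> sets borel"
  shows "prob_space.expectation M (\<lambda>\<omega>. real (card (V \<omega> \<inter> A))) = measure \<mu> A"
proof -
  interpret prob_space M using pp_prob[OF pp] .
  define X where "X = (\<lambda>\<omega>. card (V \<omega> \<inter> A))"
  define l where "l = measure \<mu> A"
  have Xm: "X \<in> M \<rightarrow>\<^sub>M count_space UNIV" unfolding X_def by (rule pp_meas[OF pp A])
  have Xs: "{\<omega> \<in> space M. X \<omega> = k} \<in> sets M" for k unfolding X_def by (rule pp_sets[OF pp A])
  have pt: "ennreal (real (X \<omega>)) = (\<Sum>k. ennreal (real k) * indicator {\<omega> \<in> space M. X \<omega> = k} \<omega>)"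
    if "\<omega> \<in> space M" for \<omega>
  proof -
    have "(\<Sum>k. ennreal (real k) * indicator {\<omega> \<in> space M. X \<omega> = k} \<omega>)
        = (\<Sum>k\<in>{X \<omega>}. ennreal (real k) * indicator {\<omega> \<in> space M. X \<omega> = k} \<omega>)"
      by (rule suminf_finite) (auto simp: indicator_def)
    also have "\<dots> = ennreal (real (X \<omega>))" using that by (simp add: indicator_def)
    finally show ?thesis by simp
  qed
  have "(\<integral>\<^sup>+ \<omega>. ennreal (real (X \<omega>)) \<partial>M) = (\<integral>\<^sup>+ \<omega>. (\<Sum>k. ennreal (real k) * indicator {\<omega> \<in> space M. X \<omega> = k} \<omega>) \<partial>M)"
    by (rule nn_integral_cong) (simp add: pt)
  also have "\<dots> = (\<Sum>k. \<integral>\<^sup>+ \<omega>. ennreal (real k) * indicator {\<omega> \<in> space M. X \<omega> = k} \<omega> \<partial>M)"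
    by (rule nn_integral_suminf) (use Xs in auto)
  also have "\<dots> = (\<Sum>k. ennreal (real k) * emeasure M {\<omega> \<in> space M. X \<omega> = k})"
    by (subst nn_integral_cmult_indicator[OF Xs]) simp
  also have "\<dots> = (\<Sum>k. ennreal (real k * (exp (- l) * l ^ k / fact k)))"
  proof -
    have "ennreal (real k) * emeasure M {\<omega> \<in> space M. X \<omega> = k} = ennreal (real k * (exp (- l) * l ^ k / fact k))" for k
    proof -
      have "emeasure M {\<omega> \<in> space M. X \<omega> = k} = ennreal (exp (- l) * l ^ k / fact k)"
        using emeasure_eq_measure[of "{\<omega> \<in> space M. X \<omega> = k}"] pp_eq[OF pp A, of k]
        unfolding X_def l_def by simp
      moreover have "0 \<le> l" unfolding l_def by simp
      then have "ennreal (real k * (exp (- l) * l ^ k / fact k)) = ennreal (real k) * ennreal (exp (- l) * l ^ k / fact k)"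
        by (intro ennreal_mult) auto
      ultimately show ?thesis by simp
    qed
    then show ?thesis by simp
  qed
  also have "\<dots> = ennreal l"
  proof (rule suminf_ennreal_eq)
    show "(\<lambda>k. real k * (exp (- l) * l ^ k / fact k)) sums l" by (rule poisson_mean_sums)
    have "0 \<le> l" unfolding l_def by simp
    then show "0 \<le> real k * (exp (- l) * l ^ k / fact k)" for k by simp
  qed
  finally have N: "(\<integral>\<^sup>+ \<omega>. ennreal (real (X \<omega>)) \<partial>M) = ennreal l" .
  have bm: "(\<lambda>\<omega>. real (X \<omega>)) \<in> borel_measurable M"
    using Xm by (rule measurable_compose) simp
  have "integrable M (\<lambda>\<omega>. real (X \<omega>)) \<and> integral\<^sup>L M (\<lambda>\<omega>. real (X \<omega>)) = l"
    using nn_integral_eq_integrable[OF bm _, of l] N unfolding l_def by simp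
  then show ?thesis unfolding X_def l_def by simp
qed

definition Tset :: "real \<Rightarrow> real \<Rightarrow> real set" where
  "Tset a b = {\<theta>::real. 0 \<le> \<theta> \<and> \<theta> < 2*pi \<and> (\<exists>k::int. a \<le> \<theta> + 2*pi * of_int k \<and> \<theta> + 2*pi * of_int k < b)}"

lemma int_bounds_aux:
  fixes j :: int
  assumes "-2*pi < 2*pi * of_int j" "2*pi * of_int j < 4*pi"
  shows "j = 0 \<or> j = 1"
proof -
  have "0 < 2*pi*(of_int j + 1)" using assms(1) by (simp add: algebra_simps)
  then have "0 < real_of_int j + 1" using pi_gt_zero by (simp add: zero_less_mult_iff)
  moreover have "0 < 2*pi*(2 - of_int j)" using assms(2) by (simp add: algebra_simps)
  then have "0 < 2 - real_of_int j" using pi_gt_zero by (simp add: zero_less_mult_iff)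
  ultimately show ?thesis by linarith
qed

lemma Tset_full:
  assumes "b - a \<ge> 2*pi"
  shows "Tset a b = {0..<2*pi}"
proof (intro set_eqI iffI)
  fix \<theta> assume "\<theta> \<in> Tset a b" then show "\<theta> \<in> {0..<2*pi}" unfolding Tset_def by auto
next
  fix \<theta> assume th: "\<theta> \<in> {0..<2*pi}"
  define q where "q = (\<theta> - a) / (2*pi)"
  define k where "k = - \<lfloor>q\<rfloor>"
  have q1: "of_int \<lfloor>q\<rfloor> \<le> q" by simp
  have q2: "q < of_int \<lfloor>q\<rfloor> + 1" by linarith
  have qq: "2*pi*q = \<theta> - a" unfolding q_def by simp
  have A: "2*pi * of_int \<lfloor>q\<rfloor> \<le> 2*pi*q" using q1 pi_gt_zero by (intro mult_left_mono) auto
  have B: "2*pi*q < 2*pi*(of_int \<lfloor>q\<rfloor> + 1)" using q2 pi_gt_zero by (intro mult_strict_left_mono) auto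
  have k1: "\<theta> + 2*pi * of_int k = \<theta> - 2*pi * of_int \<lfloor>q\<rfloor>" unfolding k_def by simp
  have "a \<le> \<theta> + 2*pi * of_int k" "\<theta> + 2*pi * of_int k < a + 2*pi"
  proof -
    have "2*pi*(of_int \<lfloor>q\<rfloor> + 1) = 2*pi * of_int \<lfloor>q\<rfloor> + 2*pi" by (simp add: algebra_simps)
    then show "a \<le> \<theta> + 2*pi * of_int k" "\<theta> + 2*pi * of_int k < a + 2*pi" using A B qq k1 by linarith+
  qed
  then show "\<theta> \<in> Tset a b" unfolding Tset_def using th assms by auto
qed

lemma Tset_part:
  assumes "a \<le> b" "b - a < 2*pi"
  defines "a' \<equiv> a - 2*pi * of_int \<lfloor>a/(2*pi)\<rfloor>"
  shows "Tset a b = {a'..<min (a' + (b-a)) (2*pi)} \<union> {0..<a' + (b-a) - 2*pi}"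
    and "0 \<le> a'" "a' < 2*pi"
proof -
  define m where "m = \<lfloor>a/(2*pi)\<rfloor>"
  have am: "a = a' + 2*pi * of_int m" unfolding a'_def m_def by simp
  have m1: "of_int m \<le> a/(2*pi)" "a/(2*pi) < of_int m + 1" unfolding m_def by linarith+
  have "2*pi * of_int m \<le> 2*pi*(a/(2*pi))" using m1(1) pi_gt_zero by (intro mult_left_mono) auto
  moreover have "2*pi*(a/(2*pi)) = a" by simp
  ultimately show a0: "0 \<le> a'" using am by simp
  have "2*pi*(a/(2*pi)) < 2*pi*(of_int m + 1)" using m1(2) pi_gt_zero by (intro mult_strict_left_mono) auto
  moreover have "2*pi*(a/(2*pi)) = a" by simp
  ultimately show a2: "a' < 2*pi" using am by (simp add: algebra_simps)
  show "Tset a b = {a'..<min (a' + (b-a)) (2*pi)} \<union> {0..<a' + (b-a) - 2*pi}"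
  proof (intro set_eqI iffI)
    fix \<theta> assume "\<theta> \<in> Tset a b"
    then obtain k :: int where th: "0 \<le> \<theta>" "\<theta> < 2*pi" "a \<le> \<theta> + 2*pi * of_int k" "\<theta> + 2*pi * of_int k < b"
      unfolding Tset_def by auto
    define j where "j = k - m"
    have j1: "a' \<le> \<theta> + 2*pi * of_int j" "\<theta> + 2*pi * of_int j < a' + (b - a)"
    proof -
      have "2*pi * of_int j = 2*pi * of_int k - 2*pi * of_int m" unfolding j_def by (simp add: algebra_simps)
      then show "a' \<le> \<theta> + 2*pi * of_int j" "\<theta> + 2*pi * of_int j < a' + (b - a)" using th am by linarith+
    qed
    have "j = 0 \<or> j = 1"
      by (rule int_bounds_aux) (use j1 th a0 a2 assms in linarith)+
    then show "\<theta> \<in> {a'..<min (a' + (b-a)) (2*pi)} \<union> {0..<a' + (b-a) - 2*pi}"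
      using j1 th by auto
  next
    fix \<theta> assume "\<theta> \<in> {a'..<min (a' + (b-a)) (2*pi)} \<union> {0..<a' + (b-a) - 2*pi}"
    then consider "a' \<le> \<theta>" "\<theta> < a' + (b-a)" "\<theta> < 2*pi" | "0 \<le> \<theta>" "\<theta> < a' + (b-a) - 2*pi" by auto
    then show "\<theta> \<in> Tset a b"
    proof cases
      case 1 then show ?thesis unfolding Tset_def using a0
        by (intro CollectI conjI exI[of _ m]) (use am in linarith)+
    next
      case 2 show ?thesis
      proof -
        have e: "2*pi * of_int (m+1) = 2*pi * of_int m + 2*pi" by (simp add: algebra_simps)
        show ?thesis unfolding Tset_def using 2 a0 a2 assms
          by (intro CollectI conjI exI[of _ "m+1"]) (use am e in linarith)+
      qed
    qed
  qed
qed

lemma Tset_measure: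
  assumes "a \<le> b"
  shows "emeasure lborel (Tset a b) = ennreal (min (b-a) (2*pi))"
proof (cases "b - a \<ge> 2*pi")
  case True then show ?thesis using Tset_full[OF True] by simp
next
  case False
  define a' where "a' = a - 2*pi * of_int \<lfloor>a/(2*pi)\<rfloor>"
  note P = Tset_part[OF assms, of, folded a'_def]
  have lt: "b - a < 2*pi" using False by simp
  note P = Tset_part[OF assms lt, folded a'_def]
  show ?thesis
  proof (cases "a' + (b-a) \<le> 2*pi")
    case True
    then have "Tset a b = {a'..<a' + (b-a)}" using P by auto
    then show ?thesis using assms lt by simp
  next
    case F2: False
    then have eq: "Tset a b = {a'..<2*pi} \<union> {0..<a' + (b-a) - 2*pi}" using P by auto
    have "emeasure lborel ({a'..<2*pi} \<union> {0..<a' + (b-a) - 2*pi}) = emeasure lborel {a'..<2*pi} + emeasure lborel {0..<a' + (b-a) - 2*pi}"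
      by (rule plus_emeasure[symmetric]) (use lt in auto)
    also have "\<dots> = ennreal (2*pi - a') + ennreal (a' + (b-a) - 2*pi)" using P F2 by simp
    also have "\<dots> = ennreal (b - a)" using P F2 by (subst ennreal_plus[symmetric]) auto
    finally show ?thesis using eq lt by simp
  qed
qed

lemma sector_borel: "sector R a b \<in> sets borel"
proof -
  have "sector R a b = {p \<in> space (borel \<Otimes>\<^sub>M borel). 0 \<le> R - fst p \<and> R - fst p < R \<and>
      (\<exists>k::int. a \<le> snd p + 2 * pi * of_int k \<and> snd p + 2 * pi * of_int k < b)}"
    unfolding sector_def by (auto simp: space_pair_measure)
  also have "\<dots> \<in> sets (borel \<Otimes>\<^sub>M borel)" by measurable
  also have "sets (borel \<Otimes>\<^sub>M borel) = sets (borel :: (real \<times> real) measure)" by (simp only: borel_prod)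
  finally show ?thesis .
qed

lemma annulus_borel: "annulus R t1 t2 \<in> sets borel"
proof -
  have "annulus R t1 t2 = {p \<in> space (borel \<Otimes>\<^sub>M borel). t1 \<le> R - fst p \<and> R - fst p < t2}"
    unfolding annulus_def by (auto simp: space_pair_measure)
  also have "\<dots> \<in> sets (borel \<Otimes>\<^sub>M borel)" by measurable
  also have "sets (borel \<Otimes>\<^sub>M borel) = sets (borel :: (real \<times> real) measure)" by (simp only: borel_prod)
  finally show ?thesis .
qed

lemma hyp_borel: "hyp_domain R \<in> sets borel"
proof -
  have "hyp_domain R = {p \<in> space (borel \<Otimes>\<^sub>M borel). 0 \<le> fst p \<and> fst p < R \<and> 0 \<le> snd p \<and> snd p < 2 * pi}"
    unfolding hyp_domain_def by (auto simp: space_pair_measure)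
  also have "\<dots> \<in> sets (borel \<Otimes>\<^sub>M borel)" by measurable
  also have "sets (borel \<Otimes>\<^sub>M borel) = sets (borel :: (real \<times> real) measure)" by (simp only: borel_prod)
  finally show ?thesis .
qed

lemma Tset_borel: "Tset a b \<in> sets borel"
proof -
  have "Tset a b = {x \<in> space borel. 0 \<le> x \<and> x < 2*pi \<and> (\<exists>k::int. a \<le> x + 2*pi * of_int k \<and> x + 2*pi * of_int k < b)}"
    unfolding Tset_def by auto
  also have "\<dots> \<in> sets borel" by measurable
  finally show ?thesis .
qed

definition Rset :: "real \<Rightarrow> real \<Rightarrow> real \<Rightarrow> real set" where
  "Rset R t1 t2 = {r. 0 < r \<and> r < R \<and> t1 \<le> R - r \<and> R - r < t2}"

lemma Rset_borel: "Rset R t1 t2 \<in> sets borel"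
proof -
  have "Rset R t1 t2 = {x \<in> space borel. 0 < x \<and> x < R \<and> t1 \<le> R - x \<and> R - x < t2}"
    unfolding Rset_def by auto
  also have "\<dots> \<in> sets borel" by measurable
  finally show ?thesis .
qed

lemma poi_meas: "poi_intensity \<alpha> \<nu> R \<in> borel_measurable borel"
proof -
  have "poi_intensity \<alpha> \<nu> R = (\<lambda>r. (\<nu> * exp (R / 2) * (1 / (2 * pi)) * \<alpha> / (cosh (\<alpha> * R) - 1)) * sinh (\<alpha> * r))"
    unfolding poi_intensity_def by (simp add: fun_eq_iff)
  also have "\<dots> \<in> borel_measurable borel"
    by (intro borel_measurable_continuous_onI continuous_intros)
  finally show ?thesis .
qed

lemma sets_bb: "sets (borel \<Otimes>\<^sub>M borel) = sets (borel :: (real \<times> real) measure)"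
  by (simp only: borel_prod)

lemma g_meas: "(\<lambda>p. ennreal (indicator (hyp_domain R) p * poi_intensity \<alpha> \<nu> R (fst p))) \<in> borel_measurable borel"
proof -
  have H: "hyp_domain R \<in> sets (borel \<Otimes>\<^sub>M borel)" using hyp_borel sets_bb by simp
  have "(\<lambda>p. ennreal (indicator (hyp_domain R) p * poi_intensity \<alpha> \<nu> R (fst p))) \<in> borel_measurable (borel \<Otimes>\<^sub>M borel)"
    using H poi_meas by measurable
  then show ?thesis by (simp cong: measurable_cong_sets add: sets_bb)
qed

lemma mu_ann_sec:
  "emeasure (intensity_measure \<alpha> \<nu> n) (annulus (Rn \<nu> n) t1 t2 \<inter> sector (Rn \<nu> n) a b)
   = (\<integral>\<^sup>+ r. ennreal (indicator (Rset (Rn \<nu> n) t1 t2) r * poi_intensity \<alpha> \<nu> (Rn \<nu> n) r) \<partial>lborel)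
     * emeasure lborel (Tset a b)"
proof -
  define R where "R = Rn \<nu> n"
  define f where "f = poi_intensity \<alpha> \<nu> R"
  define X where "X = annulus R t1 t2 \<inter> sector R a b"
  define h where "h = (\<lambda>p::real\<times>real. ennreal (indicator (Rset R t1 t2) (fst p) * f (fst p)) * indicator (Tset a b) (snd p))"
  have Xb: "X \<in> sets borel" unfolding X_def using annulus_borel sector_borel by blast
  have set_eq: "p \<in> hyp_domain R \<inter> X \<longleftrightarrow> fst p \<in> Rset R t1 t2 \<and> snd p \<in> Tset a b" for p
    unfolding hyp_domain_def X_def annulus_def sector_def Rset_def Tset_def by (cases p) auto
  have pt: "ennreal (indicator (hyp_domain R) p * f (fst p)) * indicator X p = h p" for p
  proof (cases "p \<in> hyp_domain R \<inter> X")
    case True then show ?thesis using set_eq[of p] unfolding h_def by (simp add: indicator_def)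
  next
    case False then show ?thesis using set_eq[of p] unfolding h_def by (auto simp: indicator_def)
  qed
  have hm: "h \<in> borel_measurable (lborel \<Otimes>\<^sub>M lborel)"
  proof -
    have "h \<in> borel_measurable (borel \<Otimes>\<^sub>M borel)"
      unfolding h_def f_def using Rset_borel Tset_borel poi_meas by measurable
    then show ?thesis by (simp add: measurable_lborel1 cong: measurable_cong_sets)
  qed
  have "emeasure (intensity_measure \<alpha> \<nu> n) X = (\<integral>\<^sup>+ p. ennreal (indicator (hyp_domain R) p * f (fst p)) * indicator X p \<partial>lborel)"
    unfolding intensity_measure_def R_def f_def using Xb by (subst emeasure_density) (auto simp: R_def g_meas)
  also have "\<dots> = (\<integral>\<^sup>+ p. h p \<partial>lborel)" by (simp add: pt)
  also have "\<dots> = (\<integral>\<^sup>+ p. h p \<partial>(lborel \<Otimes>\<^sub>M lborel))" by (simp add: lborel_prod)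
  also have "\<dots> = (\<integral>\<^sup>+ r. \<integral>\<^sup>+ \<theta>. h (r, \<theta>) \<partial>lborel \<partial>lborel)"
    by (rule lborel.nn_integral_fst[symmetric, OF hm])
  also have "\<dots> = (\<integral>\<^sup>+ r. ennreal (indicator (Rset R t1 t2) r * f r) * emeasure lborel (Tset a b) \<partial>lborel)"
  proof -
    have T': "Tset a b \<in> sets lborel" using Tset_borel by simp
    show ?thesis unfolding h_def by (simp add: nn_integral_cmult_indicator[OF T'])
  qed
  also have "\<dots> = (\<integral>\<^sup>+ r. ennreal (indicator (Rset R t1 t2) r * f r) \<partial>lborel) * emeasure lborel (Tset a b)"
    by (rule nn_integral_multc) (use Rset_borel poi_meas in \<open>unfold f_def; measurable\<close>)
  finally show ?thesis unfolding X_def R_def f_def .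
qed

lemma f_bound:
  assumes "\<alpha> > 1" "\<nu> > 0" "R \<ge> 2" "0 \<le> r" "r \<le> R"
  shows "poi_intensity \<alpha> \<nu> R r \<le> \<nu> * exp (R/2) * \<alpha> / pi"
proof -
  define x where "x = \<alpha> * R"
  have "1 * 2 \<le> \<alpha> * R" by (rule mult_mono) (use assms in auto)
  then have x2: "x \<ge> 2" unfolding x_def by simp
  have e2: "exp x \<ge> 4"
  proof -
    have "exp 1 \<ge> (2::real)" using exp_ge_add_one_self[of 1] by simp
    then have "2 * 2 \<le> exp 1 * (exp 1::real)" by (intro mult_mono) auto
    then have "exp 1 * exp 1 \<ge> (4::real)" by simp
    then have "exp 2 \<ge> (4::real)" by (simp add: exp_add[symmetric])
    moreover have "exp 2 \<le> exp x" using x2 by simp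
    ultimately show ?thesis by linarith
  qed
  have sh: "sinh (\<alpha> * r) \<le> sinh x" unfolding x_def using assms by (simp add: mult_left_mono)
  have shp: "0 \<le> sinh (\<alpha> * r)" using assms by simp
  have ch: "cosh x - 1 \<ge> sinh x / 2"
  proof -
    have "cosh x - 1 - sinh x / 2 = exp x / 4 + 3 * exp (-x) / 4 - 1"
      unfolding cosh_def sinh_def by (simp add: field_simps)
    moreover have "exp (-x) > 0" by simp
    ultimately show ?thesis using e2 by linarith
  qed
  have sxp: "sinh x > 0" using x2 by simp
  have q: "\<alpha> * sinh (\<alpha> * r) / (cosh x - 1) \<le> \<alpha> * 2"
  proof -
    have dpos: "cosh x - 1 > 0" using ch sxp by linarith
    have "\<alpha> * sinh (\<alpha> * r) \<le> \<alpha> * sinh x" using sh assms by (intro mult_left_mono) auto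
    also have "\<dots> \<le> \<alpha> * 2 * (cosh x - 1)" using ch assms by (simp add: mult_left_mono)
    finally show ?thesis using dpos by (simp add: divide_le_eq)
  qed
  have c0: "0 \<le> \<nu> * exp (R / 2) * (1 / (2 * pi))" using assms by simp
  have "poi_intensity \<alpha> \<nu> R r = \<nu> * exp (R / 2) * (1 / (2 * pi)) * (\<alpha> * sinh (\<alpha> * r) / (cosh x - 1))"
    unfolding poi_intensity_def x_def by simp
  also have "\<dots> \<le> \<nu> * exp (R / 2) * (1 / (2 * pi)) * (\<alpha> * 2)"
    by (rule mult_left_mono[OF q c0])
  also have "\<dots> = \<nu> * exp (R/2) * \<alpha> / pi" by simp
  finally show ?thesis .
qed

lemma G_bound:
  assumes "\<alpha> > 1" "\<nu> > 0" "R \<ge> 2"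
  shows "(\<integral>\<^sup>+ r. ennreal (indicator (Rset R t1 t2) r * poi_intensity \<alpha> \<nu> R r) \<partial>lborel)
         \<le> ennreal (\<nu> * exp (R/2) * \<alpha> / pi * R)"
proof -
  define C where "C = \<nu> * exp (R/2) * \<alpha> / pi"
  have C0: "C \<ge> 0" unfolding C_def using assms by simp
  have "(\<integral>\<^sup>+ r. ennreal (indicator (Rset R t1 t2) r * poi_intensity \<alpha> \<nu> R r) \<partial>lborel)
        \<le> (\<integral>\<^sup>+ r. ennreal C * indicator {0..R} r \<partial>lborel)"
  proof (rule nn_integral_mono)
    fix r
    show "ennreal (indicator (Rset R t1 t2) r * poi_intensity \<alpha> \<nu> R r) \<le> ennreal C * indicator {0..R} r"
    proof (cases "r \<in> Rset R t1 t2")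
      case True
      then have "0 \<le> r" "r \<le> R" unfolding Rset_def by auto
      then have "poi_intensity \<alpha> \<nu> R r \<le> C" unfolding C_def using f_bound assms by blast
      then show ?thesis using True \<open>0 \<le> r\<close> \<open>r \<le> R\<close> by (simp add: indicator_def ennreal_leI)
    next
      case False then show ?thesis by simp
    qed
  qed
  also have "\<dots> = ennreal C * emeasure lborel {0..R}" by (rule nn_integral_cmult_indicator) simp
  also have "\<dots> = ennreal (C * R)" using assms C0 by (simp add: ennreal_mult)
  finally show ?thesis unfolding C_def .
qed

lemma Tset_empty: "b \<le> a \<Longrightarrow> Tset a b = {}"
  unfolding Tset_def by auto

lemma Tset_meas_real: "a \<le> b \<Longrightarrow> measure lborel (Tset a b) = min (b - a) (2*pi)"
  using Tset_measure[of a b] by (simp add: measure_def)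

lemma phi_bound:
  assumes "w \<ge> 0"
  shows "measure lborel (Tset c (c + 4*\<theta> + w)) \<le> measure lborel (Tset (0 - 2*\<theta>) (0 + 2*\<theta>)) + w"
proof (cases "\<theta> \<ge> 0")
  case True
  then have "measure lborel (Tset c (c + 4*\<theta> + w)) = min (4*\<theta> + w) (2*pi)"
    using assms by (subst Tset_meas_real) auto
  moreover have "measure lborel (Tset (0 - 2*\<theta>) (0 + 2*\<theta>)) = min (4*\<theta>) (2*pi)"
    using True by (subst Tset_meas_real) auto
  ultimately show ?thesis using assms by linarith
next
  case False
  have z: "measure lborel (Tset (0 - 2*\<theta>) (0 + 2*\<theta>)) = 0" using False by (simp add: Tset_empty)
  show ?thesis
  proof (cases "c \<le> c + 4*\<theta> + w")
    case True
    then have "measure lborel (Tset c (c + 4*\<theta> + w)) = min (4*\<theta> + w) (2*pi)"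
      by (subst Tset_meas_real) auto
    then show ?thesis using z False by linarith
  next
    case F2: False
    then show ?thesis using z assms by (simp add: Tset_empty)
  qed
qed

lemma mu_real:
  "measure (intensity_measure \<alpha> \<nu> n) (annulus (Rn \<nu> n) t1 t2 \<inter> sector (Rn \<nu> n) a b)
   = enn2real (\<integral>\<^sup>+ r. ennreal (indicator (Rset (Rn \<nu> n) t1 t2) r * poi_intensity \<alpha> \<nu> (Rn \<nu> n) r) \<partial>lborel)
     * measure lborel (Tset a b)"
  unfolding measure_def mu_ann_sec by (simp add: enn2real_mult)

lemma sector_cover:
  fixes \<phi> \<theta> w R :: real
  assumes w: "w > 0"
  defines "a \<equiv> \<phi> - 2*\<theta>"
  defines "a' \<equiv> a - 2*pi * of_int \<lfloor>a/(2*pi)\<rfloor>"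
  defines "k \<equiv> \<lfloor>a'/w\<rfloor>"
  shows "sector R (\<phi> - 2*\<theta>) (\<phi> + 2*\<theta>) \<subseteq> sector R (of_int k * w) (of_int k * w + 4*\<theta> + w)"
    and "k \<in> {0..int (nat \<lceil>2*pi / w\<rceil>)}"
proof -
  define f where "f = \<lfloor>a/(2*pi)\<rfloor>"
  have af: "a = a' + 2*pi * of_int f" unfolding a'_def f_def by simp
  have m1: "of_int f \<le> a/(2*pi)" "a/(2*pi) < of_int f + 1" unfolding f_def by linarith+
  have "2*pi * of_int f \<le> 2*pi*(a/(2*pi))" using m1(1) pi_gt_zero by (intro mult_left_mono) auto
  moreover have "2*pi*(a/(2*pi)) = a" by simp
  ultimately have a0: "0 \<le> a'" using af by simp
  have "2*pi*(a/(2*pi)) < 2*pi*(of_int f + 1)" using m1(2) pi_gt_zero by (intro mult_strict_left_mono) auto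
  moreover have "2*pi*(a/(2*pi)) = a" by simp
  moreover have "2*pi*(of_int f + 1) = 2*pi * of_int f + 2*pi" by (simp add: algebra_simps)
  ultimately have a2: "a' < 2*pi" using af by linarith
  have k1: "of_int k \<le> a'/w" "a'/w < of_int k + 1" unfolding k_def by linarith+
  have "of_int k * w \<le> (a'/w) * w" using k1(1) w by (intro mult_right_mono) auto
  then have kw1: "of_int k * w \<le> a'" using w by simp
  have "(a'/w) * w < (of_int k + 1) * w" using k1(2) w by (intro mult_strict_right_mono) auto
  then have kw2: "a' < of_int k * w + w" using w by (simp add: algebra_simps)
  show "sector R (\<phi> - 2*\<theta>) (\<phi> + 2*\<theta>) \<subseteq> sector R (of_int k * w) (of_int k * w + 4*\<theta> + w)"
  proof
    fix p assume "p \<in> sector R (\<phi> - 2*\<theta>) (\<phi> + 2*\<theta>)"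
    then obtain r x m where p: "p = (r, x)" "0 \<le> R - r" "R - r < R"
      "\<phi> - 2*\<theta> \<le> x + 2*pi * of_int (m::int)" "x + 2*pi * of_int m < \<phi> + 2*\<theta>"
      unfolding sector_def by auto
    have e: "2*pi * of_int (m - f) = 2*pi * of_int m - 2*pi * of_int f" by (simp add: algebra_simps)
    have "of_int k * w \<le> x + 2*pi * of_int (m - f)" "x + 2*pi * of_int (m - f) < of_int k * w + 4*\<theta> + w"
      using p(4,5) e af kw1 kw2 unfolding a_def by linarith+
    then show "p \<in> sector R (of_int k * w) (of_int k * w + 4*\<theta> + w)"
      unfolding sector_def using p by blast
  qed
  have k0: "0 \<le> k" unfolding k_def using a0 w by simp
  have "a'/w < 2*pi/w" using a2 w by (simp add: divide_strict_right_mono)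
  then have "of_int k < 2*pi/w" using k1(1) by linarith
  then have "k \<le> \<lceil>2*pi/w\<rceil>" by linarith
  moreover have "0 < 2*pi/w" using w by simp
  then have "0 \<le> \<lceil>2*pi/w\<rceil>" by (simp add: zero_le_ceiling)
  ultimately show "k \<in> {0..int (nat \<lceil>2*pi / w\<rceil>)}" using k0 by simp
qed

lemma tail_arith:
  fixes x :: real assumes "x \<ge> 0"
  shows "exp (x + 1) / 2 powr (4*x) \<le> exp 1 * exp (-x)"
proof -
  have e2: "exp 2 \<le> (16::real)"
  proof -
    have "exp 1 < (3::real)" using e_less_272 by simp
    then have "exp 1 * exp 1 \<le> (3::real) * 3" by (intro mult_mono) auto
    then show ?thesis by (simp add: exp_add[symmetric])
  qed
  have "ln (exp 2) \<le> ln (16::real)" using e2 by (subst ln_le_cancel_iff) auto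
  moreover have "ln (16::real) = 4 * ln 2"
  proof -
    have "ln ((2::real)^4) = real 4 * ln 2" by (rule ln_realpow)
    then show ?thesis by simp
  qed
  ultimately have l2: "2 \<le> 4 * ln (2::real)" by simp
  have "x * 2 \<le> x * (4 * ln 2)" using l2 assms by (intro mult_left_mono) auto
  then have "2*x \<le> 4*x*ln 2" by (simp add: algebra_simps)
  then have "exp (2*x) \<le> exp (4*x*ln 2)" by simp
  also have "exp (4*x*ln 2) = 2 powr (4*x)" by (simp add: powr_def mult.commute)
  finally have q: "exp (2*x) \<le> 2 powr (4*x)" .
  have "exp (x + 1) / 2 powr (4*x) \<le> exp (x + 1) / exp (2*x)"
    using q by (intro divide_left_mono) auto
  also have "\<dots> = exp 1 * exp (-x)" by (simp add: exp_diff[symmetric] exp_add[symmetric] algebra_simps)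
  finally show ?thesis .
qed

lemma imax_bound:
  assumes "\<alpha> > 1" "R \<ge> 3"
  shows "i_max \<alpha> R \<le> nat \<lceil>R\<rceil>"
  unfolding i_max_def
proof (rule Least_le)
  have lR: "ln R \<ge> 1"
  proof -
    have "exp 1 < (3::real)" using e_less_272 by simp
    then have "exp 1 \<le> R" using assms by simp
    then show ?thesis using assms by (simp add: ln_ge_iff)
  qed
  have c: "real (nat \<lceil>R\<rceil>) \<ge> R" by linarith
  have "0 \<le> 4 * \<alpha> / (\<alpha> - 1)" using assms by simp
  then have "3 * R \<le> 4 * \<alpha> / (\<alpha> - 1) + 3 * real (nat \<lceil>R\<rceil>)" using c by linarith
  also have "\<dots> \<le> (4 * \<alpha> / (\<alpha> - 1) + 3 * real (nat \<lceil>R\<rceil>)) * ln R"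
    using lR \<open>0 \<le> 4 * \<alpha> / (\<alpha> - 1)\<close> by (simp add: mult_le_cancel_left1)
  finally have "3 * R \<le> t_layer \<alpha> R (nat \<lceil>R\<rceil>)" unfolding t_layer_def .
  moreover have "R / (2 * \<alpha>) \<le> 3 * R"
  proof -
    have "R / (2*\<alpha>) \<le> R / 1" using assms by (intro divide_left_mono) auto
    then show ?thesis using assms by simp
  qed
  ultimately show "R / (2 * \<alpha>) \<le> t_layer \<alpha> R (nat \<lceil>R\<rceil>)" by linarith
qed

lemma Theta_eq:
  "Theta_set \<alpha> R Vs i j (x, 0) = Vs \<inter> (layer \<alpha> R j \<inter> sector R (0 - 2*theta_ij \<alpha> R i j) (0 + 2*theta_ij \<alpha> R i j))"
  unfolding Theta_set_def by (simp only: snd_conv Int_assoc)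

lemma bad_bound:
  assumes pp: "poisson_pp Mn (hyp_domain (Rn \<nu> n)) (intensity_measure \<alpha> \<nu> n) Vn"
    and a: "\<alpha> > 1" "\<nu> > 0" and R3: "Rn \<nu> n \<ge> 3"
    and small: "\<nu> * exp (Rn \<nu> n/2) * \<alpha> / pi * Rn \<nu> n * exp (- Rn \<nu> n) \<le> 1"
  shows "measure Mn {\<omega> \<in> space Mn. real (card (Vn \<omega> \<inter> (layer \<alpha> (Rn \<nu> n) j \<inter> sector (Rn \<nu> n) c (c + 4 * theta_ij \<alpha> (Rn \<nu> n) i j + exp (- Rn \<nu> n)))))
       > 4 * max (8 * Rn \<nu> n) (prob_space.expectation Mn (\<lambda>\<omega>'. real (card (Theta_set \<alpha> (Rn \<nu> n) (Vn \<omega>') i j (x, 0)))))}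
     \<le> exp 1 * exp (- 8 * Rn \<nu> n)"
proof -
  define R where "R = Rn \<nu> n"
  define \<theta> where "\<theta> = theta_ij \<alpha> R i j"
  define \<mu> where "\<mu> = intensity_measure \<alpha> \<nu> n"
  define Bs where "Bs = layer \<alpha> R j \<inter> sector R c (c + 4*\<theta> + exp (-R))"
  define A0 where "A0 = layer \<alpha> R j \<inter> sector R (0 - 2*\<theta>) (0 + 2*\<theta>)"
  define Ex where "Ex = prob_space.expectation Mn (\<lambda>\<omega>'. real (card (Theta_set \<alpha> R (Vn \<omega>') i j (x, 0))))"
  define Mx where "Mx = max (8*R) Ex"
  define g where "g = enn2real (\<integral>\<^sup>+ r. ennreal (indicator (Rset R (t_lower \<alpha> R j) (t_layer \<alpha> R j)) r * poi_intensity \<alpha> \<nu> R r) \<partial>lborel)"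
  have pp': "poisson_pp Mn (hyp_domain R) \<mu> Vn" using pp unfolding R_def \<mu>_def .
  have A0b: "A0 \<in> sets borel" unfolding A0_def layer_def using annulus_borel sector_borel by blast
  have Bsb: "Bs \<in> sets borel" unfolding Bs_def layer_def using annulus_borel sector_borel by blast
  have "Ex = prob_space.expectation Mn (\<lambda>\<omega>'. real (card (Vn \<omega>' \<inter> A0)))"
    unfolding Ex_def A0_def \<theta>_def Theta_eq ..
  also have "\<dots> = measure \<mu> A0" by (rule pp_mean[OF pp' A0b])
  finally have Ex_eq: "Ex = measure \<mu> A0" .
  have mA0: "measure \<mu> A0 = g * measure lborel (Tset (0 - 2*\<theta>) (0 + 2*\<theta>))"
    unfolding A0_def layer_def \<mu>_def R_def g_def by (rule mu_real)
  have mB: "measure \<mu> Bs = g * measure lborel (Tset c (c + 4*\<theta> + exp (-R)))"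
    unfolding Bs_def layer_def \<mu>_def R_def g_def by (rule mu_real)
  have g0: "g \<ge> 0" unfolding g_def by simp
  have gb: "g \<le> \<nu> * exp (R/2) * \<alpha> / pi * R"
    unfolding g_def by (rule enn2real_leI) (use a R3 G_bound[of \<alpha> \<nu> R] in \<open>auto simp: R_def\<close>)
  have "g * exp (-R) \<le> (\<nu> * exp (R/2) * \<alpha> / pi * R) * exp (-R)"
    using gb by (intro mult_right_mono) auto
  then have gw: "g * exp (-R) \<le> 1" using small unfolding R_def by linarith
  have "measure \<mu> Bs \<le> g * (measure lborel (Tset (0 - 2*\<theta>) (0 + 2*\<theta>)) + exp (-R))"
    unfolding mB using phi_bound[of "exp (-R)" c \<theta>] g0 by (intro mult_left_mono) auto
  also have "\<dots> = Ex + g * exp (-R)" using Ex_eq mA0 by (simp add: algebra_simps)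
  finally have mBle: "measure \<mu> Bs \<le> Mx + 1" using gw unfolding Mx_def by linarith
  have Mx8: "Mx \<ge> 8 * R" unfolding Mx_def by simp
  have Mx0: "0 \<le> 4 * Mx" using Mx8 R3 unfolding R_def by linarith
  have "measure Mn {\<omega> \<in> space Mn. real (card (Vn \<omega> \<inter> Bs)) > 4 * Mx} \<le> exp (measure \<mu> Bs) / 2 powr (4 * Mx)"
    by (rule pp_tail[OF pp' Bsb Mx0])
  also have "\<dots> \<le> exp (Mx + 1) / 2 powr (4 * Mx)"
    using mBle by (intro divide_right_mono) auto
  also have "\<dots> \<le> exp 1 * exp (- Mx)" by (rule tail_arith) (use Mx0 in linarith)
  also have "\<dots> \<le> exp 1 * exp (- 8 * R)" using Mx8 by simp
  finally show ?thesis unfolding Bs_def Mx_def Ex_def \<theta>_def R_def .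
qed

lemma A2: "((\<lambda>R::real. \<nu> * exp (R/2) * \<alpha> / pi * R * exp (-R)) \<longlongrightarrow> 0) at_top"
  by real_asymp

lemma A3: "((\<lambda>R::real. (R+2)^2 * (2*pi*exp R + 2) * exp 1 * exp (-8*R)) \<longlongrightarrow> 0) at_top"
  by real_asymp

lemma A1:
  assumes "\<nu> > 0"
  shows "filterlim (\<lambda>n. Rn \<nu> n) at_top sequentially"
proof -
  have L: "filterlim (\<lambda>x::real. 2 * (ln x - ln \<nu>)) at_top at_top" by real_asymp
  have "filterlim (\<lambda>x::real. 2 * ln (x / \<nu>)) at_top at_top"
  proof (rule filterlim_cong[THEN iffD1, OF refl refl _ L])
    show "\<forall>\<^sub>F x in at_top. 2 * (ln x - ln \<nu>) = 2 * ln (x / \<nu>)"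
      using eventually_gt_at_top[of 0] by eventually_elim (use assms in \<open>simp add: ln_div\<close>)
  qed
  from filterlim_compose[OF this filterlim_real_sequentially]
  show ?thesis unfolding Rn_def .
qed

lemma card_int_range: "card {0..int m} = m + 1"
  by simp

theorem lemma4p2:
  fixes \<alpha> \<nu> :: real
    and M :: "nat \<Rightarrow> 'w measure"
    and V :: "nat \<Rightarrow> 'w \<Rightarrow> (real \<times> real) set"
  assumes "\<alpha> > 1" and "\<nu> > 0"
    and "\<forall>n. poisson_pp (M n) (hyp_domain (Rn \<nu> n)) (intensity_measure \<alpha> \<nu> n) (V n)"
  shows "\<exists>E. (\<forall>n. E n \<in> sets (M n) \<and>
              E n \<subseteq> {\<omega> \<in> space (M n).
                 \<forall>i j. j < i \<longrightarrow> i \<le> i_max \<alpha> (Rn \<nu> n) \<longrightarrow>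
                   (\<forall>v \<in> V n \<omega> \<inter> layer \<alpha> (Rn \<nu> n) i.
                      real (card (Theta_set \<alpha> (Rn \<nu> n) (V n \<omega>) i j v))
                        \<le> 4 * max (8 * Rn \<nu> n)
                             (prob_space.expectation (M n)
                               (\<lambda>\<omega>'. real (card (Theta_set \<alpha> (Rn \<nu> n) (V n \<omega>') i j
                                   (Rn \<nu> n - t_layer \<alpha> (Rn \<nu> n) i, 0))))))})
           \<and> (\<lambda>n. measure (M n) (E n)) \<longlonglongrightarrow> 1"
proof -
  define Mx where "Mx = (\<lambda>n i j. max (8 * Rn \<nu> n)
                             (prob_space.expectation (M n)
                               (\<lambda>\<omega>'. real (card (Theta_set \<alpha> (Rn \<nu> n) (V n \<omega>') i j
                                   (Rn \<nu> n - t_layer \<alpha> (Rn \<nu> n) i, 0))))))"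
  define w where "w = (\<lambda>n. exp (- Rn \<nu> n))"
  define K where "K = (\<lambda>n. {0..int (nat \<lceil>2*pi / w n\<rceil>)})"
  define Pr where "Pr = (\<lambda>n. Sigma {..i_max \<alpha> (Rn \<nu> n)} (\<lambda>i. {..<i}))"
  define B where "B = (\<lambda>n i j (k::int). layer \<alpha> (Rn \<nu> n) j \<inter> sector (Rn \<nu> n) (of_int k * w n) (of_int k * w n + 4 * theta_ij \<alpha> (Rn \<nu> n) i j + w n))"
  define Bad where "Bad = (\<lambda>n i j k. {\<omega> \<in> space (M n). real (card (V n \<omega> \<inter> B n i j k)) > 4 * Mx n i j})"
  define U where "U = (\<lambda>n. \<Union>p\<in>Pr n. \<Union>k\<in>K n. Bad n (fst p) (snd p) k)"
  define E where "E = (\<lambda>n. space (M n) - U n)"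
  have pp: "poisson_pp (M n) (hyp_domain (Rn \<nu> n)) (intensity_measure \<alpha> \<nu> n) (V n)" for n
    using assms(3) by blast
  have Bb: "B n i j k \<in> sets borel" for n i j k unfolding B_def layer_def using annulus_borel sector_borel by blast
  have Bad_s: "Bad n i j k \<in> sets (M n)" for n i j k unfolding Bad_def by (rule pp_sets[OF pp Bb])
  have finPr: "finite (Pr n)" for n unfolding Pr_def by auto
  have finK: "finite (K n)" for n unfolding K_def by auto
  have UK_s: "(\<Union>k\<in>K n. Bad n i j k) \<in> sets (M n)" for n i j
    using finK Bad_s by (intro sets.finite_UN) auto
  have U_s: "U n \<in> sets (M n)" for n
    unfolding U_def by (rule sets.finite_UN[OF finPr]) (rule UK_s)
  have E_s: "E n \<in> sets (M n)" for n unfolding E_def using U_s by auto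
  have sub: "E n \<subseteq> {\<omega> \<in> space (M n).
                 \<forall>i j. j < i \<longrightarrow> i \<le> i_max \<alpha> (Rn \<nu> n) \<longrightarrow>
                   (\<forall>v \<in> V n \<omega> \<inter> layer \<alpha> (Rn \<nu> n) i.
                      real (card (Theta_set \<alpha> (Rn \<nu> n) (V n \<omega>) i j v)) \<le> 4 * Mx n i j)}" for n
  proof
    fix \<omega> assume \<omega>: "\<omega> \<in> E n"
    then have sp: "\<omega> \<in> space (M n)" and nU: "\<omega> \<notin> U n" unfolding E_def by auto
    have "\<forall>\<omega>\<in>space (M n). finite (V n \<omega>) \<and> V n \<omega> \<subseteq> hyp_domain (Rn \<nu> n)"
      using pp[of n] unfolding poisson_pp_def by (elim conjE)
    then have finV: "finite (V n \<omega>)" using sp by blast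
    have good: "real (card (V n \<omega> \<inter> B n i j k)) \<le> 4 * Mx n i j" if "(i,j) \<in> Pr n" "k \<in> K n" for i j k
    proof (rule ccontr)
      assume "\<not> ?thesis"
      then have "\<omega> \<in> Bad n i j k" unfolding Bad_def using sp by auto
      then have "\<omega> \<in> U n" unfolding U_def using that by force
      then show False using nU by simp
    qed
    have wpos: "w n > 0" unfolding w_def by simp
    show "\<omega> \<in> {\<omega> \<in> space (M n).
                 \<forall>i j. j < i \<longrightarrow> i \<le> i_max \<alpha> (Rn \<nu> n) \<longrightarrow>
                   (\<forall>v \<in> V n \<omega> \<inter> layer \<alpha> (Rn \<nu> n) i.
                      real (card (Theta_set \<alpha> (Rn \<nu> n) (V n \<omega>) i j v)) \<le> 4 * Mx n i j)}"
    proof (intro CollectI conjI allI impI ballI sp)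
      fix i j v assume ji: "j < i" "i \<le> i_max \<alpha> (Rn \<nu> n)" and v: "v \<in> V n \<omega> \<inter> layer \<alpha> (Rn \<nu> n) i"
      define \<theta> where "\<theta> = theta_ij \<alpha> (Rn \<nu> n) i j"
      define a where "a = snd v - 2*\<theta>"
      define a' where "a' = a - 2*pi * of_int \<lfloor>a/(2*pi)\<rfloor>"
      define k where "k = \<lfloor>a'/w n\<rfloor>"
      note SC1 = sector_cover(1)[where \<phi>="snd v" and \<theta>=\<theta> and R="Rn \<nu> n", OF wpos, folded a_def, folded a'_def, folded k_def]
      note SC2 = sector_cover(2)[where \<phi>="snd v" and \<theta>=\<theta>, OF wpos, folded a_def, folded a'_def, folded k_def]
      have kK: "k \<in> K n" using SC2 unfolding K_def .
      have ijP: "(i, j) \<in> Pr n" unfolding Pr_def using ji by auto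
      have "Theta_set \<alpha> (Rn \<nu> n) (V n \<omega>) i j v \<subseteq> V n \<omega> \<inter> B n i j k"
        unfolding Theta_set_def B_def using SC1[unfolded a_def] unfolding \<theta>_def by auto
      then have "card (Theta_set \<alpha> (Rn \<nu> n) (V n \<omega>) i j v) \<le> card (V n \<omega> \<inter> B n i j k)"
        by (rule card_mono[rotated]) (use finV in auto)
      then show "real (card (Theta_set \<alpha> (Rn \<nu> n) (V n \<omega>) i j v)) \<le> 4 * Mx n i j"
        using good[OF ijP kK] by linarith
    qed
  qed
  define hh where "hh = (\<lambda>R::real. (R+2)^2 * (2*pi*exp R + 2) * exp 1 * exp (-8*R))"
  have lower: "1 - hh (Rn \<nu> n) \<le> measure (M n) (E n)"
    if R3: "Rn \<nu> n \<ge> 3" and small: "\<nu> * exp (Rn \<nu> n/2) * \<alpha> / pi * Rn \<nu> n * exp (- Rn \<nu> n) \<le> 1" for n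
  proof -
    interpret prob_space "M n" using pp_prob[OF pp] .
    define R where "R = Rn \<nu> n"
    define bnd where "bnd = exp 1 * exp (- 8 * R)"
    have bad_le: "measure (M n) (Bad n i j k) \<le> bnd" for i j k
      unfolding Bad_def B_def Mx_def bnd_def R_def w_def
      by (rule bad_bound[OF pp assms(1,2) R3 small])
    have "measure (M n) (U n) \<le> (\<Sum>p\<in>Pr n. measure (M n) (\<Union>k\<in>K n. Bad n (fst p) (snd p) k))"
      unfolding U_def by (rule measure_UNION_le[OF finPr]) (use UK_s in auto)
    also have "\<dots> \<le> (\<Sum>p\<in>Pr n. (\<Sum>k\<in>K n. measure (M n) (Bad n (fst p) (snd p) k)))"
      by (intro sum_mono measure_UNION_le[OF finK]) (use Bad_s in auto)
    also have "\<dots> \<le> (\<Sum>p\<in>Pr n. real (card (K n)) * bnd)"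
      by (intro sum_mono sum_bounded_above) (use bad_le in auto)
    also have "\<dots> = real (card (Pr n)) * (real (card (K n)) * bnd)" by simp
    also have "\<dots> \<le> (R+2)^2 * ((2*pi*exp R + 2) * bnd)"
    proof (rule mult_mono)
      define I where "I = i_max \<alpha> R"
      have I: "I \<le> nat \<lceil>R\<rceil>" unfolding I_def by (rule imax_bound) (use assms(1) R3 R_def in auto)
      have "Pr n \<subseteq> {..I} \<times> {..I}" unfolding Pr_def I_def R_def by auto
      then have "card (Pr n) \<le> card ({..I} \<times> {..I})" by (rule card_mono[rotated]) auto
      also have "\<dots> = (I+1) * (I+1)" by (simp add: card_cartesian_product)
      finally have c1: "real (card (Pr n)) \<le> real (I+1) * real (I+1)" by (metis of_nat_le_iff of_nat_mult)
      have "real I \<le> real (nat \<lceil>R\<rceil>)" using I by simp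
      moreover have "real (nat \<lceil>R\<rceil>) = of_int \<lceil>R\<rceil>" using R3 unfolding R_def by simp
      moreover have "of_int \<lceil>R\<rceil> \<le> R + 1" by (rule of_int_ceiling_le_add_one)
      ultimately have "real I \<le> R + 1" by linarith
      then have "real (I+1) \<le> R + 2" by simp
      then have "real (I+1) * real (I+1) \<le> (R+2) * (R+2)" by (intro mult_mono) auto
      then show "real (card (Pr n)) \<le> (R+2)^2" using c1 by (simp add: power2_eq_square)
      have "card (K n) = nat \<lceil>2*pi / w n\<rceil> + 1" unfolding K_def by (rule card_int_range)
      moreover have "2*pi / w n = 2*pi*exp R" unfolding w_def R_def by (simp add: exp_minus field_simps)
      moreover have "real (nat \<lceil>2*pi*exp R\<rceil>) = of_int \<lceil>2*pi*exp R\<rceil>"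
      proof -
        have "0 < 2*pi*exp R" by simp
        then have "-1 < 2*pi*exp R" by linarith
        then have "0 \<le> \<lceil>2*pi*exp R\<rceil>" by (simp add: zero_le_ceiling)
        then show ?thesis by simp
      qed
      moreover have "of_int \<lceil>2*pi*exp R\<rceil> \<le> 2*pi*exp R + 1" by (rule of_int_ceiling_le_add_one)
      ultimately have "real (card (K n)) \<le> 2*pi*exp R + 2" by (simp del: of_int_ceiling_le_add_one)
      then show "real (card (K n)) * bnd \<le> (2*pi*exp R + 2) * bnd"
        by (intro mult_right_mono) (auto simp: bnd_def)
      show "0 \<le> (R+2)^2" by simp
      show "0 \<le> real (card (K n)) * bnd" by (simp add: bnd_def)
    qed
    also have "\<dots> = hh R" unfolding hh_def bnd_def by (simp add: algebra_simps)
    finally have "measure (M n) (U n) \<le> hh R" .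
    moreover have "measure (M n) (E n) = 1 - measure (M n) (U n)"
      unfolding E_def by (rule prob_compl[OF U_s])
    ultimately show ?thesis unfolding R_def by linarith
  qed
  have Rlim: "filterlim (\<lambda>n. Rn \<nu> n) at_top sequentially" by (rule A1[OF assms(2)])
  have ev1: "\<forall>\<^sub>F n in sequentially. Rn \<nu> n \<ge> 3" using Rlim unfolding filterlim_at_top by blast
  have "\<forall>\<^sub>F R in at_top. \<nu> * exp (R/2) * \<alpha> / pi * R * exp (-R) < 1"
    by (rule order_tendstoD(2)[OF A2]) simp
  then have ev2: "\<forall>\<^sub>F n in sequentially. \<nu> * exp (Rn \<nu> n/2) * \<alpha> / pi * Rn \<nu> n * exp (- Rn \<nu> n) < 1"
    by (rule eventually_compose_filterlim[OF _ Rlim])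
  have hlim: "((\<lambda>n. hh (Rn \<nu> n)) \<longlongrightarrow> 0) sequentially"
    unfolding hh_def by (rule filterlim_compose[OF A3 Rlim])
  have lim1: "((\<lambda>n. 1 - hh (Rn \<nu> n)) \<longlongrightarrow> 1) sequentially"
    using tendsto_diff[OF tendsto_const hlim, of 1] by simp
  have "(\<lambda>n. measure (M n) (E n)) \<longlonglongrightarrow> 1"
  proof (rule real_tendsto_sandwich[OF _ _ lim1 tendsto_const])
    show "\<forall>\<^sub>F n in sequentially. 1 - hh (Rn \<nu> n) \<le> measure (M n) (E n)"
      using ev1 ev2 by eventually_elim (rule lower, auto)
    show "\<forall>\<^sub>F n in sequentially. measure (M n) (E n) \<le> 1"
      by (intro always_eventually allI prob_space.prob_le_1[OF pp_prob[OF pp]])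
  qed
  then show ?thesis
    using E_s sub unfolding Mx_def by (intro exI[of _ E]) blast
qed

end
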